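(* Let $m$ be even and let $G=B(m;R,S,T)$ be a bicirculant with $m/2\notin R\cup T$, and let $G^{=}=B(m;R\cup\{m/2\},S,T\cup\{m/2\})$. Suppose $G^{=}$ is connected. Then either $G$ is connected, or $G$ consists of exactly two connected components, both isomorphic to a connected graph $G_0$; in the latter case $G^{=}$ is isomorphic to the cartesian product $G_0\,\square\,K_2$.
   Context: For an integer $m\ge 1$ and subsets $R,S,T\subseteq\mathbb{Z}_m$ with $R=-R$, $T=-T$, $0\notin R\cup T$, $0\in S$ and $|R|=|T|$, the bicirculant $B(m;R,S,T)$ is the graph with vertex set $\{u_0,\dots,u_{m-1}\}\cup\{v_0,\dots,v_{m-1}\}$ and edge set $\{u_iu_{i+j}: i\in\mathbb{Z}_m, j\in R\}\cup\{v_iv_{i+j}: i\in\mathbb{Z}_m, j\in T\}\cup\{u_iv_{i+j}: i\in\mathbb{Z}_m, j\in S\}$ (indices mod $m$). *)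

theory Defs
  imports Main
begin

text \<open>A (simple, undirected) graph is given by a vertex set and an adjacency
  relation; only adjacencies between vertices of the vertex set are relevant.\<close>
type_synonym 'a sgraph = "'a set \<times> ('a \<Rightarrow> 'a \<Rightarrow> bool)"

definition gverts :: "'a sgraph \<Rightarrow> 'a set" where
  "gverts G = fst G"

definition gadj :: "'a sgraph \<Rightarrow> 'a \<Rightarrow> 'a \<Rightarrow> bool" where
  "gadj G x y \<longleftrightarrow> x \<in> fst G \<and> y \<in> fst G \<and> snd G x y"

definition reach :: "'a sgraph \<Rightarrow> 'a \<Rightarrow> 'a \<Rightarrow> bool" where
  "reach G x y \<longleftrightarrow> x \<in> gverts G \<and> (gadj G)\<^sup>*\<^sup>* x y"

definition gconnected :: "'a sgraph \<Rightarrow> bool" where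
  "gconnected G \<longleftrightarrow> gverts G \<noteq> {} \<and> (\<forall>x\<in>gverts G. \<forall>y\<in>gverts G. reach G x y)"

definition components :: "'a sgraph \<Rightarrow> 'a set set" where
  "components G = {C. \<exists>x\<in>gverts G. C = {y. reach G x y}}"

definition induced :: "'a sgraph \<Rightarrow> 'a set \<Rightarrow> 'a sgraph" where
  "induced G C = (C, \<lambda>x y. gadj G x y \<and> x \<in> C \<and> y \<in> C)"

definition graph_iso :: "'a sgraph \<Rightarrow> 'b sgraph \<Rightarrow> bool" where
  "graph_iso G H \<longleftrightarrow> (\<exists>f. bij_betw f (gverts G) (gverts H) \<and>
      (\<forall>x\<in>gverts G. \<forall>y\<in>gverts G. gadj G x y \<longleftrightarrow> gadj H (f x) (f y)))"

definition prod_K2 :: "'a sgraph \<Rightarrow> ('a \<times> bool) sgraph" where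
  "prod_K2 G = (gverts G \<times> UNIV,
     \<lambda>(x,a) (y,b). (a = b \<and> gadj G x y) \<or> (x = y \<and> a \<noteq> b))"

text \<open>Bicirculant B(m;R,S,T). Z_m is represented by {0..<m} (integers);
  vertex u_i is (False,i), v_i is (True,i).\<close>
definition bicirc_params :: "int \<Rightarrow> int set \<Rightarrow> int set \<Rightarrow> int set \<Rightarrow> bool" where
  "bicirc_params m R S T \<longleftrightarrow> m \<ge> 1 \<and>
     R \<subseteq> {0..<m} \<and> S \<subseteq> {0..<m} \<and> T \<subseteq> {0..<m} \<and>
     (\<forall>j\<in>R. (- j) mod m \<in> R) \<and> (\<forall>j\<in>T. (- j) mod m \<in> T) \<and>
     0 \<notin> R \<and> 0 \<notin> T \<and> 0 \<in> S \<and> card R = card T"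

definition bicirc :: "int \<Rightarrow> int set \<Rightarrow> int set \<Rightarrow> int set \<Rightarrow> (bool \<times> int) sgraph" where
  "bicirc m R S T = ({(b,i). 0 \<le> i \<and> i < m},
     \<lambda>(b,i) (c,k).
        (\<not> b \<and> \<not> c \<and> (k - i) mod m \<in> R) \<or>
        (b \<and> c \<and> (k - i) mod m \<in> T) \<or>
        (\<not> b \<and> c \<and> (k - i) mod m \<in> S) \<or>
        (b \<and> \<not> c \<and> (i - k) mod m \<in> S))"

end

theory Submission
  imports Defs
begin


lemma gadj_V: "gadj G x y \<Longrightarrow> x \<in> gverts G \<and> y \<in> gverts G"
  by (simp add: gadj_def gverts_def)

lemma rt_V: "(gadj G)\<^sup>*\<^sup>* x y \<Longrightarrow> x \<in> gverts G \<Longrightarrow> y \<in> gverts G"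
  by (induction rule: rtranclp.induct) (auto dest: gadj_V)

lemma reach_V: "reach G x y \<Longrightarrow> x \<in> gverts G \<and> y \<in> gverts G"
  unfolding reach_def using rt_V by metis

lemma reach_refl: "x \<in> gverts G \<Longrightarrow> reach G x x"
  by (simp add: reach_def)

lemma reach_trans: "reach G x y \<Longrightarrow> reach G y z \<Longrightarrow> reach G x z"
  unfolding reach_def by auto

lemma reach_step: "reach G x y \<Longrightarrow> gadj G y z \<Longrightarrow> reach G x z"
  unfolding reach_def by auto

lemma rt_sym:
  assumes sym: "\<And>x y. gadj G x y \<Longrightarrow> gadj G y x"
  shows "(gadj G)\<^sup>*\<^sup>* x y \<Longrightarrow> (gadj G)\<^sup>*\<^sup>* y x"
proof (induction rule: rtranclp.induct)
  case (rtrancl_refl a) then show ?case by simp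
next
  case (rtrancl_into_rtrancl a b c)
  then show ?case using sym converse_rtranclp_into_rtranclp by metis
qed

lemma reach_sym:
  assumes sym: "\<And>x y. gadj G x y \<Longrightarrow> gadj G y x"
  shows "reach G x y \<Longrightarrow> reach G y x"
  using rt_sym[OF sym] reach_V unfolding reach_def by metis

lemma rt_aut:
  assumes aut: "\<And>x y. x\<in>gverts G \<Longrightarrow> y\<in>gverts G \<Longrightarrow> gadj G (f x) (f y) = gadj G x y"
  shows "(gadj G)\<^sup>*\<^sup>* x y \<Longrightarrow> (gadj G)\<^sup>*\<^sup>* (f x) (f y)"
proof (induction rule: rtranclp.induct)
  case (rtrancl_refl a) then show ?case by simp
next
  case (rtrancl_into_rtrancl a b c)
  then show ?case using aut gadj_V by (metis rtranclp.rtrancl_into_rtrancl)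
qed

lemma reach_aut:
  assumes aut: "\<And>x y. x\<in>gverts G \<Longrightarrow> y\<in>gverts G \<Longrightarrow> gadj G (f x) (f y) = gadj G x y"
    and fV: "\<And>x. x \<in> gverts G \<Longrightarrow> f x \<in> gverts G"
  shows "reach G x y \<Longrightarrow> reach G (f x) (f y)"
  using rt_aut[OF aut] fV unfolding reach_def by metis

lemma abstract:
  fixes G G' :: "'a sgraph" and \<phi> :: "'a \<Rightarrow> 'a"
  assumes V: "gverts G' = gverts G"
  and sym: "\<And>x y. gadj G x y \<Longrightarrow> gadj G y x"
  and inv: "\<And>x. x \<in> gverts G \<Longrightarrow> \<phi> x \<in> gverts G \<and> \<phi> (\<phi> x) = x"
  and aut: "\<And>x y. x\<in>gverts G \<Longrightarrow> y\<in>gverts G \<Longrightarrow> gadj G (\<phi> x) (\<phi> y) = gadj G x y"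
  and adj': "\<And>x y. gadj G' x y = (x\<in>gverts G \<and> y\<in>gverts G \<and> (gadj G x y \<or> y = \<phi> x))"
  and conn: "gconnected G'"
  shows "gconnected G \<or> (\<exists>G0::'a sgraph. gconnected G0 \<and> card (components G) = 2 \<and>
     (\<forall>C\<in>components G. graph_iso (induced G C) G0) \<and> graph_iso G' (prod_K2 G0))"
proof (cases "\<forall>x\<in>gverts G. reach G x (\<phi> x)")
  case True
  have "(gadj G')\<^sup>*\<^sup>* x y \<Longrightarrow> x \<in> gverts G \<Longrightarrow> reach G x y" for x y
  proof (induction rule: rtranclp.induct)
    case (rtrancl_refl a) then show ?case by (simp add: reach_refl)
  next
    case (rtrancl_into_rtrancl a b c)
    then have rb: "reach G a b" by simp
    from rtrancl_into_rtrancl.hyps(2) adj' have "b \<in> gverts G" "gadj G b c \<or> c = \<phi> b" by auto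
    then show ?case using rb True reach_step reach_trans by metis
  qed
  then have "gconnected G" using conn V unfolding gconnected_def reach_def by auto
  then show ?thesis by simp
next
  case False
  then obtain x0 where x0: "x0 \<in> gverts G" "\<not> reach G x0 (\<phi> x0)" by auto
  define C where "C = {y. reach G x0 y}"
  define D where "D = {y. reach G (\<phi> x0) y}"
  have ra: "reach G x y \<Longrightarrow> reach G (\<phi> x) (\<phi> y)" for x y
    using reach_aut[OF aut] inv by metis
  have rs: "reach G x y \<Longrightarrow> reach G y x" for x y using reach_sym[OF sym] by metis
  have CV: "C \<subseteq> gverts G" "D \<subseteq> gverts G" using reach_V C_def D_def by fastforce+
  have phiC: "x \<in> C \<Longrightarrow> \<phi> x \<in> D" for x using ra C_def D_def by auto
  have phiD: "x \<in> D \<Longrightarrow> \<phi> x \<in> C" for x using ra C_def D_def inv x0(1) by (metis mem_Collect_eq)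
  have disj: "C \<inter> D = {}"
  proof (rule ccontr)
    assume "C \<inter> D \<noteq> {}"
    then obtain y where "reach G x0 y" "reach G (\<phi> x0) y" unfolding C_def D_def by auto
    then have "reach G x0 (\<phi> x0)" using rs reach_trans by metis
    then show False using x0 by simp
  qed
  have cover: "(gadj G')\<^sup>*\<^sup>* x0 y \<Longrightarrow> y \<in> C \<union> D" for y
  proof (induction rule: rtranclp_induct)
    case base then show ?case using reach_refl[OF x0(1)] C_def by auto
  next
    case (step b c)
    from step.hyps(2) adj' have "gadj G b c \<or> c = \<phi> b" by auto
    then show ?case
    proof
      assume h: "gadj G b c"
      show ?thesis
      proof (cases "b \<in> C")
        case True then have "c \<in> C" using h reach_step unfolding C_def by (metis mem_Collect_eq)
        then show ?thesis by simp
      next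
        case False then have "b \<in> D" using step.IH by auto
        then have "c \<in> D" using h reach_step unfolding D_def by (metis mem_Collect_eq)
        then show ?thesis by simp
      qed
    next
      assume "c = \<phi> b"
      then show ?thesis using step.IH phiC phiD by auto
    qed
  qed
  have VCD: "gverts G = C \<union> D"
  proof
    show "gverts G \<subseteq> C \<union> D" using conn V cover unfolding gconnected_def reach_def
      using x0(1) by auto
  qed (use CV in auto)
  have x0C: "x0 \<in> C" using reach_refl[OF x0(1)] C_def by auto
  have px0D: "\<phi> x0 \<in> D" using phiC x0C by auto
  have clC: "x \<in> C \<Longrightarrow> gadj G x y \<Longrightarrow> y \<in> C" for x y unfolding C_def using reach_step by (metis mem_Collect_eq)
  have clD: "x \<in> D \<Longrightarrow> gadj G x y \<Longrightarrow> y \<in> D" for x y unfolding D_def using reach_step by (metis mem_Collect_eq)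
  have compC: "x \<in> C \<Longrightarrow> {y. reach G x y} = C" for x
  proof -
    assume "x \<in> C"
    then have a: "reach G x0 x" "reach G x x0" using rs C_def by auto
    show ?thesis unfolding C_def using a reach_trans by metis
  qed
  have compD: "x \<in> D \<Longrightarrow> {y. reach G x y} = D" for x
  proof -
    assume "x \<in> D"
    then have a: "reach G (\<phi> x0) x" "reach G x (\<phi> x0)" using rs D_def by auto
    show ?thesis unfolding D_def using a reach_trans by metis
  qed
  have comps: "components G = {C, D}"
  proof
    show "components G \<subseteq> {C, D}" unfolding components_def using VCD compC compD by auto
    have "C \<in> components G" unfolding components_def using compC[OF x0C] x0C CV by auto
    moreover have "D \<in> components G" unfolding components_def using compD[OF px0D] px0D CV by auto
    ultimately show "{C, D} \<subseteq> components G" by auto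
  qed
  have CD: "C \<noteq> D" using disj x0C by auto
  have card: "card (components G) = 2" using comps CD by simp
  define G0 where "G0 = induced G C"
  have vG0: "gverts G0 = C" by (simp add: G0_def induced_def gverts_def)
  have aG0: "gadj G0 x y = (gadj G x y \<and> x \<in> C \<and> y \<in> C)" for x y
    by (auto simp add: G0_def induced_def gadj_def)
  have rtC: "(gadj G)\<^sup>*\<^sup>* x y \<Longrightarrow> x \<in> C \<Longrightarrow> y \<in> C \<and> (gadj G0)\<^sup>*\<^sup>* x y" for x y
  proof (induction rule: rtranclp.induct)
    case (rtrancl_refl a) then show ?case by simp
  next
    case (rtrancl_into_rtrancl a b c)
    then show ?case using clC aG0 by (metis rtranclp.rtrancl_into_rtrancl)
  qed
  have conn0: "gconnected G0"
    unfolding gconnected_def vG0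
  proof (intro conjI ballI)
    show "C \<noteq> {}" using x0C by auto
    fix x y assume xy: "x \<in> C" "y \<in> C"
    then have "reach G x y" using compC by blast
    then have "(gadj G)\<^sup>*\<^sup>* x y" by (simp add: reach_def)
    then show "reach G0 x y" using rtC xy by (simp add: reach_def vG0)
  qed
  have isoC: "graph_iso (induced G C) G0"
    unfolding graph_iso_def G0_def by (rule exI[of _ id]) simp
  have isoD: "graph_iso (induced G D) G0"
    unfolding graph_iso_def
  proof (intro exI conjI ballI)
    show "bij_betw \<phi> (gverts (induced G D)) (gverts G0)"
      unfolding vG0 by (rule bij_betw_byWitness[where f'=\<phi>])
        (use inv CV phiC phiD in \<open>auto simp: induced_def gverts_def\<close>)
    fix x y assume "x \<in> gverts (induced G D)" "y \<in> gverts (induced G D)"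
    then have xy: "x \<in> D" "y \<in> D" by (auto simp: induced_def gverts_def)
    have "gadj (induced G D) x y = gadj G x y" using xy by (auto simp: induced_def gadj_def)
    also have "\<dots> = gadj G (\<phi> x) (\<phi> y)" using aut xy CV by auto
    also have "\<dots> = gadj G0 (\<phi> x) (\<phi> y)" using aG0 phiD xy by auto
    finally show "gadj (induced G D) x y = gadj G0 (\<phi> x) (\<phi> y)" .
  qed
  define f where "f y = (if y \<in> C then (y, False) else (\<phi> y, True))" for y
  define g where "g = (\<lambda>(x::'a, a::bool). if a then \<phi> x else x)"
  have vP: "gverts (prod_K2 G0) = C \<times> UNIV" using vG0 by (simp add: prod_K2_def gverts_def)
  have aP: "gadj (prod_K2 G0) (x,a) (y,b) = (x \<in> C \<and> y \<in> C \<and>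
     ((a = b \<and> gadj G0 x y) \<or> (x = y \<and> a \<noteq> b)))" for x y a b
    by (auto simp: prod_K2_def gadj_def gverts_def vG0[unfolded gverts_def])
  have fV: "x \<in> gverts G \<Longrightarrow> f x \<in> C \<times> UNIV" for x using VCD phiD f_def by auto
  have isoP: "graph_iso G' (prod_K2 G0)"
    unfolding graph_iso_def
  proof (intro exI conjI ballI)
    show "bij_betw f (gverts G') (gverts (prod_K2 G0))"
      unfolding vP V
    proof (rule bij_betw_byWitness[where f'=g])
      show "\<forall>a\<in>gverts G. g (f a) = a"
      proof
        fix a assume a: "a \<in> gverts G"
        show "g (f a) = a"
        proof (cases "a \<in> C")
          case True then show ?thesis by (simp add: f_def g_def)
        next
          case False then show ?thesis using inv[OF a] by (simp add: f_def g_def)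
        qed
      qed
      show "\<forall>a'\<in>C \<times> UNIV. f (g a') = a'"
      proof
        fix a' assume "a' \<in> C \<times> (UNIV :: bool set)"
        then obtain x b where a': "a' = (x, b)" "x \<in> C" by auto
        show "f (g a') = a'"
        proof (cases b)
          case True
          have "\<phi> x \<notin> C" using phiC[OF a'(2)] disj by blast
          moreover have "\<phi> (\<phi> x) = x" using inv a'(2) CV by blast
          ultimately show ?thesis using True a' by (simp add: f_def g_def)
        next
          case False then show ?thesis using a' by (simp add: f_def g_def)
        qed
      qed
      show "f ` gverts G \<subseteq> C \<times> UNIV" using fV by blast
      show "g ` (C \<times> UNIV) \<subseteq> gverts G" using CV phiC unfolding g_def by (auto simp: subset_iff)
    qed
    fix x y assume "x \<in> gverts G'" "y \<in> gverts G'"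
    then have xy: "x \<in> gverts G" "y \<in> gverts G" using V by auto
    have nC: "x \<in> C \<Longrightarrow> y \<in> D \<Longrightarrow> \<not> gadj G x y" using clC disj by (metis disjoint_iff)
    have nD: "x \<in> D \<Longrightarrow> y \<in> C \<Longrightarrow> \<not> gadj G x y" using clD disj by (metis disjoint_iff)
    have L: "gadj G' x y = (gadj G x y \<or> y = \<phi> x)" using adj' xy by simp
    have dj: "u \<in> C \<Longrightarrow> u \<in> D \<Longrightarrow> False" for u using disj by blast
    show "gadj G' x y = gadj (prod_K2 G0) (f x) (f y)"
    proof (cases "x \<in> C")
      case xC: True
      show ?thesis
      proof (cases "y \<in> C")
        case yC: True
        have fx: "f x = (x, False)" "f y = (y, False)" using xC yC f_def by auto
        have "y \<noteq> \<phi> x" using phiC[OF xC] yC dj by metis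
        then show ?thesis unfolding L fx aP aG0 using xC yC by simp
      next
        case False
        then have yD: "y \<in> D" using VCD xy by auto
        have fx: "f x = (x, False)" "f y = (\<phi> y, True)" using xC False f_def by auto
        have "y = \<phi> x \<longleftrightarrow> x = \<phi> y" using inv xy by metis
        then show ?thesis unfolding L fx aP using xC phiD[OF yD] nC[OF xC yD] by auto
      qed
    next
      case xC: False
      then have xD: "x \<in> D" using VCD xy by auto
      show ?thesis
      proof (cases "y \<in> C")
        case yC: True
        have fx: "f x = (\<phi> x, True)" "f y = (y, False)" using xC yC f_def by auto
        have "y = \<phi> x \<longleftrightarrow> \<phi> x = y" by auto
        then show ?thesis unfolding L fx aP using yC phiD[OF xD] nD[OF xD yC] by auto
      next
        case False
        then have yD: "y \<in> D" using VCD xy by auto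
        have fx: "f x = (\<phi> x, True)" "f y = (\<phi> y, True)" using xC False f_def by auto
        have "y \<noteq> \<phi> x" using phiD[OF xD] yD dj by metis
        moreover have "gadj G0 (\<phi> x) (\<phi> y) = gadj G x y"
          unfolding aG0 using aut xy phiD[OF xD] phiD[OF yD] by simp
        ultimately show ?thesis unfolding L fx aP using phiD[OF xD] phiD[OF yD] by simp
      qed
    qed
  qed
  have "\<forall>C'\<in>components G. graph_iso (induced G C') G0" using comps isoC isoD by simp
  then show ?thesis using conn0 card isoP by blast
qed



lemma bic_verts: "gverts (bicirc m R S T) = {(b,i). 0 \<le> i \<and> i < m}"
  by (simp add: bicirc_def gverts_def)

lemma bic_adj: "gadj (bicirc m R S T) (b,i) (c,k) = (0 \<le> i \<and> i < m \<and> 0 \<le> k \<and> k < m \<and>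
       ((\<not> b \<and> \<not> c \<and> (k - i) mod m \<in> R) \<or>
        (b \<and> c \<and> (k - i) mod m \<in> T) \<or>
        (\<not> b \<and> c \<and> (k - i) mod m \<in> S) \<or>
        (b \<and> \<not> c \<and> (i - k) mod m \<in> S)))"
  by (simp add: bicirc_def gadj_def)

lemma negmod: "(i - k) mod (m::int) = (- ((k - i) mod m)) mod m"
  by (simp add: mod_minus_eq)

lemma shiftmod: "((k + h) mod (m::int) - (i + h) mod m) mod m = (k - i) mod m"
  by (simp add: mod_diff_eq)

lemma halfmod:
  fixes i k m h :: int
  assumes "0 \<le> i" "i < m" "0 \<le> k" "k < m" "m = 2 * h"
  shows "((k - i) mod m = h) = (k = (i + h) mod m)"
proof -
  have e1: "(k - i) mod m = (if k \<ge> i then k - i else k - i + m)"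
  proof (cases "k \<ge> i")
    case True then show ?thesis using assms by simp
  next
    case False
    have "(k - i) mod m = (k - i + m) mod m" by simp
    also have "\<dots> = k - i + m" using False assms by (intro mod_pos_pos_trivial) auto
    finally show ?thesis using False by simp
  qed
  have e2: "(i + h) mod m = (if i + h < m then i + h else i + h - m)"
  proof (cases "i + h < m")
    case True then show ?thesis using assms by (simp add: mod_pos_pos_trivial)
  next
    case False
    have "(i + h) mod m = (i + h - m) mod m" by (simp add: mod_diff_right_eq[symmetric])
    also have "\<dots> = i + h - m" using False assms by (intro mod_pos_pos_trivial) auto
    finally show ?thesis using False by simp
  qed
  show ?thesis unfolding e1 e2 using assms by auto
qed



lemma L_sym:
  assumes Rc: "\<And>j. j \<in> R \<Longrightarrow> (- j) mod m \<in> R" and Tc: "\<And>j. j \<in> T \<Longrightarrow> (- j) mod m \<in> T"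
  and "gadj (bicirc m R S T) x y"
  shows "gadj (bicirc m R S T) y x"
proof -
  obtain b i c k where xy: "x = (b,i)" "y = (c,k)" by (cases x, cases y) auto
  have n1: "(k - i) mod m \<in> R \<Longrightarrow> (i - k) mod m \<in> R" using Rc negmod[of i k m] by metis
  have n2: "(k - i) mod m \<in> T \<Longrightarrow> (i - k) mod m \<in> T" using Tc negmod[of i k m] by metis
  show ?thesis using assms(3) n1 n2 unfolding xy bic_adj by blast
qed



definition shiftv :: "int \<Rightarrow> bool \<times> int \<Rightarrow> bool \<times> int" where
  "shiftv m = (\<lambda>(b,i). (b, (i + m div 2) mod m))"

lemma shiftv_simp: "shiftv m (b,i) = (b, (i + m div 2) mod m)"
  by (simp add: shiftv_def)

lemma L_inv:
  assumes "even m" "m \<ge> 1" "x \<in> gverts (bicirc m R S T)"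
  shows "shiftv m x \<in> gverts (bicirc m R S T) \<and> shiftv m (shiftv m x) = x"
proof -
  obtain b i where x: "x = (b,i)" by (cases x) auto
  have i: "0 \<le> i" "i < m" using assms(3) x by (auto simp: bic_verts)
  have "((i + m div 2) mod m + m div 2) mod m = (i + 2 * (m div 2)) mod m"
    by (simp add: mod_add_left_eq add.assoc)
  also have "\<dots> = i" using i assms(1) by simp
  finally show ?thesis using x i assms(2) by (simp add: bic_verts shiftv_simp)
qed

lemma L_aut:
  assumes "m \<ge> 1" "x \<in> gverts (bicirc m R S T)" "y \<in> gverts (bicirc m R S T)"
  shows "gadj (bicirc m R S T) (shiftv m x) (shiftv m y) = gadj (bicirc m R S T) x y"
proof -
  obtain b i c k where xy: "x = (b,i)" "y = (c,k)" by (cases x, cases y) auto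
  have r: "0 \<le> i" "i < m" "0 \<le> k" "k < m" using assms xy by (auto simp: bic_verts)
  have s1: "((k + m div 2) mod m - (i + m div 2) mod m) mod m = (k - i) mod m" by (rule shiftmod)
  have s2: "((i + m div 2) mod m - (k + m div 2) mod m) mod m = (i - k) mod m" by (rule shiftmod)
  show ?thesis unfolding xy shiftv_simp bic_adj s1 s2 using r assms(1) by simp
qed

lemma L_adj:
  assumes "even m" "m \<ge> 1"
  shows "gadj (bicirc m (R \<union> {m div 2}) S (T \<union> {m div 2})) x y =
    (x \<in> gverts (bicirc m R S T) \<and> y \<in> gverts (bicirc m R S T) \<and>
     (gadj (bicirc m R S T) x y \<or> y = shiftv m x))"
proof -
  obtain b i c k where xy: "x = (b,i)" "y = (c,k)" by (cases x, cases y) auto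
  show ?thesis
  proof (cases "0 \<le> i \<and> i < m \<and> 0 \<le> k \<and> k < m")
    case True
    then have hm: "((k - i) mod m = m div 2) = (k = (i + m div 2) mod m)"
      using halfmod[of i m k "m div 2"] assms(1) by auto
    show ?thesis unfolding xy shiftv_simp bic_adj bic_verts using True hm by auto
  next
    case False
    then show ?thesis unfolding xy bic_adj bic_verts by auto
  qed
qed



theorem lemma2p8:
  fixes m :: int and R S T :: "int set"
  assumes "bicirc_params m R S T"
    and "even m"
    and "m div 2 \<notin> R \<union> T"
    and "gconnected (bicirc m (R \<union> {m div 2}) S (T \<union> {m div 2}))"
  shows "gconnected (bicirc m R S T) \<or>
    (\<exists>G0 :: (bool \<times> int) sgraph. gconnected G0 \<and>
       card (components (bicirc m R S T)) = 2 \<and>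
       (\<forall>C\<in>components (bicirc m R S T). graph_iso (induced (bicirc m R S T) C) G0) \<and>
       graph_iso (bicirc m (R \<union> {m div 2}) S (T \<union> {m div 2})) (prod_K2 G0))"
proof -
  have m1: "m \<ge> 1" using assms(1) by (simp add: bicirc_params_def)
  have Rc: "\<And>j. j \<in> R \<Longrightarrow> (- j) mod m \<in> R" and Tc: "\<And>j. j \<in> T \<Longrightarrow> (- j) mod m \<in> T"
    using assms(1) by (auto simp: bicirc_params_def)
  show ?thesis
  proof (rule abstract[where \<phi> = "shiftv m"])
    show "gverts (bicirc m (R \<union> {m div 2}) S (T \<union> {m div 2})) = gverts (bicirc m R S T)"
      by (simp add: bic_verts)
    show "gadj (bicirc m R S T) y x" if "gadj (bicirc m R S T) x y" for x y
      using L_sym[OF Rc Tc that] .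
    show "shiftv m x \<in> gverts (bicirc m R S T) \<and> shiftv m (shiftv m x) = x"
      if "x \<in> gverts (bicirc m R S T)" for x using L_inv[OF assms(2) m1 that] .
    show "gadj (bicirc m R S T) (shiftv m x) (shiftv m y) = gadj (bicirc m R S T) x y"
      if "x \<in> gverts (bicirc m R S T)" "y \<in> gverts (bicirc m R S T)" for x y
      using L_aut[OF m1 that] .
    show "gadj (bicirc m (R \<union> {m div 2}) S (T \<union> {m div 2})) x y =
      (x \<in> gverts (bicirc m R S T) \<and> y \<in> gverts (bicirc m R S T) \<and>
       (gadj (bicirc m R S T) x y \<or> y = shiftv m x))" for x y
      using L_adj[OF assms(2) m1] .
    show "gconnected (bicirc m (R \<union> {m div 2}) S (T \<union> {m div 2}))" by (rule assms(4))
  qed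
qed

end
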